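(* For any time $t_0>0$, $$\bigcup_{x\in[0,\infty)}\Delta(x,t_0)=\{(x,t): x\in[0,\infty),\ 0\le t\le t_0\}.$$
   Context: Standing assumptions: $u_0,u_b:[0,\infty)\to\mathbb{R}$ bounded measurable with $u_b>0$; $\rho_0,\rho_b:[0,\infty)\to(0,\infty)$ positive locally bounded measurable. For $x,t,y,\tau\ge0$: $F(y,x,t)=\int_0^y[tu_0(\eta)+\eta-x]\rho_0(\eta)\,d\eta$, $G(\tau,x,t)=\int_0^\tau[x-u_b(\eta)(t-\eta)]\rho_b(\eta)u_b(\eta)\,d\eta$, $F(x,t)=\min_{y\ge0}F(y,x,t)$, $G(x,t)=\min_{\tau\ge0}G(\tau,x,t)$ (minima attained); $y_*\le y^*$ smallest/largest minimizers of $F(\cdot,x,t)$, $\tau_*\le\tau^*$ those of $G(\cdot,x,t)$. Characteristic triangle $\Delta(x,t)$ ($x\ge0,t>0$): (1) if $x>0$, $F(x,t)<G(x,t)$: convex hull of $(x,t),(y_*(x,t),0),(y^*(x,t),0)$; (2) if $F(x,t)>G(x,t)$: convex hull of $(x,t),(0,\tau_*(x,t)),(0,\tau^*(x,t))$; (3) if $F(x,t)=G(x,t)$: convex hull of $(x,t),(y^*(x,t),0),(0,\tau^*(x,t)),(0,0)$; (4) if $x=0$, $F(0,t)<G(0,t)$: convex hull of $(0,t),(0,0),(y^*(0,t),0)$. *)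

theory Defs
  imports "HOL-Analysis.Analysis"
begin

definition Fint :: "(real \<Rightarrow> real) \<Rightarrow> (real \<Rightarrow> real) \<Rightarrow> real \<Rightarrow> real \<Rightarrow> real \<Rightarrow> real" where
  "Fint u0 rho0 y x t = integral {0..y} (\<lambda>\<eta>. (t * u0 \<eta> + \<eta> - x) * rho0 \<eta>)"

definition Gint :: "(real \<Rightarrow> real) \<Rightarrow> (real \<Rightarrow> real) \<Rightarrow> real \<Rightarrow> real \<Rightarrow> real \<Rightarrow> real" where
  "Gint ub rhob \<tau> x t = integral {0..\<tau>} (\<lambda>\<eta>. (x - ub \<eta> * (t - \<eta>)) * rhob \<eta> * ub \<eta>)"

definition Fmin :: "(real \<Rightarrow> real) \<Rightarrow> (real \<Rightarrow> real) \<Rightarrow> real \<Rightarrow> real \<Rightarrow> real" where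
  "Fmin u0 rho0 x t = Inf ((\<lambda>y. Fint u0 rho0 y x t) ` {0..})"

definition Gmin :: "(real \<Rightarrow> real) \<Rightarrow> (real \<Rightarrow> real) \<Rightarrow> real \<Rightarrow> real \<Rightarrow> real" where
  "Gmin ub rhob x t = Inf ((\<lambda>\<tau>. Gint ub rhob \<tau> x t) ` {0..})"

definition Fargmin :: "(real \<Rightarrow> real) \<Rightarrow> (real \<Rightarrow> real) \<Rightarrow> real \<Rightarrow> real \<Rightarrow> real set" where
  "Fargmin u0 rho0 x t = {y. 0 \<le> y \<and> (\<forall>z\<ge>0. Fint u0 rho0 y x t \<le> Fint u0 rho0 z x t)}"

definition Gargmin :: "(real \<Rightarrow> real) \<Rightarrow> (real \<Rightarrow> real) \<Rightarrow> real \<Rightarrow> real \<Rightarrow> real set" where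
  "Gargmin ub rhob x t = {\<tau>. 0 \<le> \<tau> \<and> (\<forall>s\<ge>0. Gint ub rhob \<tau> x t \<le> Gint ub rhob s x t)}"

definition y_lo where "y_lo u0 rho0 x t = Inf (Fargmin u0 rho0 x t)"
definition y_hi where "y_hi u0 rho0 x t = Sup (Fargmin u0 rho0 x t)"
definition tau_lo where "tau_lo ub rhob x t = Inf (Gargmin ub rhob x t)"
definition tau_hi where "tau_hi ub rhob x t = Sup (Gargmin ub rhob x t)"

text \<open>The characteristic triangle Delta(x,t), for x \<ge> 0, t > 0; points are (space, time).\<close>

definition char_triangle ::
  "(real \<Rightarrow> real) \<Rightarrow> (real \<Rightarrow> real) \<Rightarrow> (real \<Rightarrow> real) \<Rightarrow> (real \<Rightarrow> real) \<Rightarrow> real \<Rightarrow> real \<Rightarrow> (real \<times> real) set" where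
  "char_triangle u0 ub rho0 rhob x t =
    (let Fv = Fmin u0 rho0 x t; Gv = Gmin ub rhob x t in
     if 0 < x \<and> Fv < Gv then
       convex hull {(x, t), (y_lo u0 rho0 x t, 0), (y_hi u0 rho0 x t, 0)}
     else if Fv > Gv then
       convex hull {(x, t), (0, tau_lo ub rhob x t), (0, tau_hi ub rhob x t)}
     else if Fv = Gv then
       convex hull {(x, t), (y_hi u0 rho0 x t, 0), (0, tau_hi ub rhob x t), (0, 0)}
     else
       convex hull {(0, t), (0, 0), (y_hi u0 rho0 0 t, 0)})"

end

theory Submission
  imports Defs "HOL-Analysis.Analysis"
begin

definition Mset :: "(real\<Rightarrow>real) \<Rightarrow> (real\<Rightarrow>real) \<Rightarrow> real \<Rightarrow> real set" where
  "Mset A B x = {\<sigma>. \<forall>z. A \<sigma> - x * B \<sigma> \<le> A z - x * B z}"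

definition Dfun :: "real \<Rightarrow> real \<Rightarrow> real \<Rightarrow> real \<Rightarrow> real \<Rightarrow> real" where
  "Dfun t0 a s x \<sigma> = a*(t0+\<sigma>) - x*(s+\<sigma>) + max \<sigma> 0 * (x - a - t0 + s)"

lemma Mset_mono:
  assumes B: "strict_mono B" and xx: "x < x'" and m: "\<sigma> \<in> Mset A B x" and m': "\<sigma>' \<in> Mset A B x'"
  shows "\<sigma> \<le> \<sigma>'"
proof (rule ccontr)
  assume "\<not> \<sigma> \<le> \<sigma>'"
  then have "B \<sigma>' < B \<sigma>" using B by (simp add: strict_mono_less)
  then have p: "(x'-x)*(B \<sigma> - B \<sigma>') > 0" using xx by simp
  have 1: "A \<sigma> - x * B \<sigma> \<le> A \<sigma>' - x * B \<sigma>'" using m by (auto simp: Mset_def)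
  have 2: "A \<sigma>' - x' * B \<sigma>' \<le> A \<sigma> - x' * B \<sigma>" using m' by (auto simp: Mset_def)
  have "(x'-x)*(B \<sigma> - B \<sigma>') = x'*B \<sigma> - x * B \<sigma> - x' * B \<sigma>' + x * B \<sigma>'" by (simp add: algebra_simps)
  with 1 2 p show False by linarith
qed

lemma Mset_closed:
  assumes cA: "\<And>\<sigma>. isCont A \<sigma>" and cB: "\<And>\<sigma>. isCont B \<sigma>"
    and s: "\<sigma>s \<longlonglongrightarrow> l" and xs: "xs \<longlonglongrightarrow> x0" and m: "\<And>n. \<sigma>s n \<in> Mset A B (xs n)"
  shows "l \<in> Mset A B x0"
  unfolding Mset_def
proof (intro CollectI allI)
  fix z
  have L: "(\<lambda>n. A (\<sigma>s n) - xs n * B (\<sigma>s n)) \<longlonglongrightarrow> A l - x0 * B l"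
    by (intro tendsto_intros isCont_tendsto_compose[OF cA s] isCont_tendsto_compose[OF cB s] xs)
  have R: "(\<lambda>n. A z - xs n * B z) \<longlonglongrightarrow> A z - x0 * B z"
    by (intro tendsto_intros xs)
  show "A l - x0 * B l \<le> A z - x0 * B z"
    by (rule LIMSEQ_le[OF L R]) (use m in \<open>auto simp: Mset_def\<close>)
qed

lemma Dfun_cont: "continuous_on S (\<lambda>\<sigma>. Dfun t0 a s x \<sigma>)"
  unfolding Dfun_def by (intro continuous_intros)

lemma Dfun_tendsto: "\<sigma>s \<longlonglongrightarrow> l \<Longrightarrow> xs \<longlonglongrightarrow> x0 \<Longrightarrow> (\<lambda>n. Dfun t0 a s (xs n) (\<sigma>s n)) \<longlonglongrightarrow> Dfun t0 a s x0 l"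
  unfolding Dfun_def by (intro tendsto_intros)

lemma Dfun_pos: "\<sigma> \<ge> 0 \<Longrightarrow> Dfun t0 a s x \<sigma> = t0*a - s*x - (t0-s)*\<sigma>"
  by (simp add: Dfun_def max_def algebra_simps)
lemma Dfun_neg: "\<sigma> \<le> 0 \<Longrightarrow> Dfun t0 a s x \<sigma> = a*(t0+\<sigma>) - x*(s+\<sigma>)"
  by (simp add: Dfun_def max_def algebra_simps)

lemma Dfun_mono:
  assumes t: "0 \<le> s" "s < t0" and x: "0 \<le> x'" "x' \<le> x" and ss: "-s \<le> \<sigma>'" "\<sigma>' \<le> \<sigma>"
    and D: "Dfun t0 a s x' \<sigma>' \<le> 0"
  shows "Dfun t0 a s x \<sigma> \<le> 0"
proof -
  have Dx: "Dfun t0 a s x \<sigma>' \<le> 0"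
  proof (cases "\<sigma>' \<ge> 0")
    case True
    have "s*x' \<le> s*x" using t x by (simp add: mult_left_mono)
    then show ?thesis using D True by (simp add: Dfun_pos)
  next
    case False
    have "x'*(s+\<sigma>') \<le> x*(s+\<sigma>')" using x ss by (simp add: mult_right_mono)
    then show ?thesis using D False by (simp add: Dfun_neg)
  qed
  show ?thesis
  proof (cases "\<sigma>' \<ge> 0")
    case True
    have "(t0-s)*\<sigma>' \<le> (t0-s)*\<sigma>" using t ss by (simp add: mult_left_mono)
    then show ?thesis using Dx True ss by (simp add: Dfun_pos)
  next
    case False
    then have n: "a*(t0+\<sigma>') \<le> x*(s+\<sigma>')" using Dx by (simp add: Dfun_neg)
    have "x*(s+\<sigma>') \<le> x*(t0+\<sigma>')" using t x by (simp add: mult_left_mono)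
    with n have "a*(t0+\<sigma>') \<le> x*(t0+\<sigma>')" by linarith
    moreover have "t0+\<sigma>' > 0" using t ss by linarith
    ultimately have ax: "a \<le> x" by simp
    have D0: "Dfun t0 a s x (min \<sigma> 0) \<le> 0"
    proof -
      have "a*(min \<sigma> 0 - \<sigma>') \<le> x*(min \<sigma> 0 - \<sigma>')"
        using ax ss False by (intro mult_right_mono) auto
      then have "a*(t0+min \<sigma> 0) \<le> x*(s+min \<sigma> 0)" using n by (simp add: algebra_simps)
      then show ?thesis by (simp add: Dfun_neg)
    qed
    show ?thesis
    proof (cases "\<sigma> \<ge> 0")
      case True
      have "(t0-s)*0 \<le> (t0-s)*\<sigma>" using t True by (intro mult_left_mono) auto
      then show ?thesis using D0 True by (simp add: Dfun_pos)
    next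
      case False then show ?thesis using D0 by simp
    qed
  qed
qed

lemma cover_abstract:
  fixes A B :: "real \<Rightarrow> real"
  assumes cA: "\<And>\<sigma>. isCont A \<sigma>" and cB: "\<And>\<sigma>. isCont B \<sigma>" and Bm: "strict_mono B"
    and ne: "\<And>x. 0 \<le> x \<Longrightarrow> Mset A B x \<noteq> {}"
    and H0: "\<And>\<sigma>. \<sigma> \<in> Mset A B 0 \<Longrightarrow> \<sigma> < 0 \<Longrightarrow> \<sigma> = -t0"
    and t0: "0 < t0" and s: "0 \<le> s" "s < t0" and a: "0 \<le> a"
  shows "(\<exists>\<sigma>\<in>Mset A B 0. 0 \<le> \<sigma> \<and> Dfun t0 a s 0 \<sigma> \<le> 0) \<or>
         (\<exists>x\<ge>0. \<exists>\<sigma>1\<in>Mset A B x. \<exists>\<sigma>2\<in>Mset A B x. \<exists>\<sigma>. \<sigma>1 \<le> \<sigma> \<and> \<sigma> \<le> \<sigma>2 \<and> -s \<le> \<sigma> \<and> Dfun t0 a s x \<sigma> = 0)"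
proof -
  let ?M = "Mset A B"
  let ?D = "Dfun t0 a s"
  have low0: "-t0 \<le> \<sigma>" if "\<sigma> \<in> ?M 0" for \<sigma>
    using H0[OF that] t0 by force
  have lowb: "-t0 \<le> \<sigma>" if "0 \<le> x" "\<sigma> \<in> ?M x" for x \<sigma>
  proof (cases "x = 0")
    case True then show ?thesis using low0 that by simp
  next
    case False
    obtain \<sigma>0 where "\<sigma>0 \<in> ?M 0" using ne[of 0] by auto
    then have "\<sigma>0 \<le> \<sigma>" using Mset_mono[OF Bm _ _ that(2), of 0] False that(1) by simp
    then show ?thesis using low0[OF \<open>\<sigma>0 \<in> ?M 0\<close>] by simp
  qed
  have H3: "\<exists>X. \<forall>x\<ge>X. \<forall>\<sigma>\<in>?M x. K \<le> \<sigma>" for K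
  proof -
    define K' where "K' = max K (-t0)"
    have "continuous_on {-t0..K'} A" by (intro continuous_at_imp_continuous_on ballI cA)
    then obtain \<sigma>m where "\<sigma>m \<in> {-t0..K'}" and mm: "\<forall>y\<in>{-t0..K'}. A \<sigma>m \<le> A y"
      using continuous_attains_inf[of "{-t0..K'}" A] K'_def by auto
    define m where "m = A \<sigma>m"
    define z where "z = K' + 1"
    define d where "d = B z - B K'"
    have d: "d > 0" using Bm unfolding d_def z_def by (simp add: strict_mono_less)
    define X where "X = max 1 ((A z - m + 1)/d)"
    have "\<forall>x\<ge>X. \<forall>\<sigma>\<in>?M x. K' \<le> \<sigma>"
    proof (intro allI impI ballI; rule ccontr)
      fix x \<sigma> assume x: "X \<le> x" and sm: "\<sigma> \<in> ?M x" and nk: "\<not> K' \<le> \<sigma>"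
      have x1: "1 \<le> x" using x X_def by simp
      have "-t0 \<le> \<sigma>" using lowb[OF _ sm] x1 by simp
      then have Am: "m \<le> A \<sigma>" using mm nk m_def by simp
      have Bs: "B \<sigma> < B K'" using nk Bm by (simp add: strict_mono_less)
      have ineq: "A \<sigma> - x * B \<sigma> \<le> A z - x * B z" using sm by (simp add: Mset_def)
      have "x * d \<le> x * (B z - B \<sigma>)" using x1 Bs d_def by (intro mult_left_mono) auto
      moreover have "(A z - m + 1)/d \<le> x" using x X_def by simp
      then have "A z - m + 1 \<le> x * d" using d by (simp add: pos_divide_le_eq mult.commute)
      moreover have "x * (B z - B \<sigma>) = x * B z - x * B \<sigma>" by (simp add: algebra_simps)
      ultimately show False using ineq Am by linarith
    qed
    then show ?thesis unfolding K'_def by (meson max.boundedE)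
  qed
  obtain X where X: "\<forall>x\<ge>X. \<forall>\<sigma>\<in>?M x. max 0 (t0*a/(t0-s)) \<le> \<sigma>"
    using H3 by blast
  have bigR: "-s \<le> \<sigma> \<and> ?D x \<sigma> \<le> 0" if "X \<le> x" "0 \<le> x" "\<sigma> \<in> ?M x" for x \<sigma>
  proof -
    have K: "max 0 (t0*a/(t0-s)) \<le> \<sigma>" using X that by blast
    then have s0: "0 \<le> \<sigma>" by simp
    have "t0*a/(t0-s) \<le> \<sigma>" using K by simp
    then have "t0*a \<le> (t0-s)*\<sigma>" using s by (simp add: pos_divide_le_eq mult.commute)
    moreover have "0 \<le> s*x" using s that by simp
    ultimately show ?thesis using s0 s by (simp add: Dfun_pos)
  qed
  define S where "S = {x. 0 \<le> x \<and> (\<exists>\<sigma>\<in>?M x. \<sigma> < -s \<or> 0 < ?D x \<sigma>)}"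
  have Sbdd: "bdd_above S"
  proof (rule bdd_aboveI[of _ "max X 0"])
    fix x assume "x \<in> S"
    then obtain \<sigma> where x0: "0 \<le> x" and sm: "\<sigma> \<in> ?M x" and L: "\<sigma> < -s \<or> 0 < ?D x \<sigma>"
      unfolding S_def by blast
    show "x \<le> max X 0"
    proof (rule ccontr)
      assume "\<not> x \<le> max X 0"
      then have "X \<le> x" by simp
      then show False using bigR[OF _ x0 sm] L by simp
    qed
  qed
  have down: "\<sigma> < -s \<or> 0 < ?D x \<sigma>" if yS: "y \<in> S" and xx: "0 \<le> x" "x < y" "\<sigma> \<in> ?M x" for x y \<sigma>
  proof -
    obtain \<sigma>y where sy: "\<sigma>y \<in> ?M y" and L: "\<sigma>y < -s \<or> 0 < ?D y \<sigma>y"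
      using yS unfolding S_def by blast
    have le: "\<sigma> \<le> \<sigma>y" using Mset_mono[OF Bm xx(2) xx(3) sy] .
    show ?thesis
    proof (rule ccontr)
      assume "\<not> (\<sigma> < -s \<or> 0 < ?D x \<sigma>)"
      then have "-s \<le> \<sigma>" "?D x \<sigma> \<le> 0" by auto
      then have "?D y \<sigma>y \<le> 0" using Dfun_mono[OF s xx(1) _ _ le] xx(2) by simp
      with L le \<open>-s \<le> \<sigma>\<close> show False by simp
    qed
  qed
  show ?thesis
  proof (cases "S = {}")
    case True
    obtain \<sigma> where sm: "\<sigma> \<in> ?M 0" using ne[of 0] by auto
    have "0 \<notin> S" using True by simp
    then have R: "-s \<le> \<sigma> \<and> ?D 0 \<sigma> \<le> 0" using sm unfolding S_def by force
    then have "0 \<le> \<sigma>" using H0[OF sm] s by force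
    then show ?thesis using R sm by blast
  next
    case False
    define x0 where "x0 = Sup S"
    obtain y0 where y0: "y0 \<in> S" using False by blast
    have y0le: "y0 \<le> x0" unfolding x0_def by (rule cSup_upper[OF y0 Sbdd])
    have y0ge: "0 \<le> y0" using y0 S_def by simp
    have x0ge: "0 \<le> x0" using y0le y0ge by simp
    have left: "\<sigma> < -s \<or> 0 < ?D x \<sigma>" if xx: "0 \<le> x" "x < x0" "\<sigma> \<in> ?M x" for x \<sigma>
    proof -
      obtain y where "y \<in> S" "x < y" using xx(2) less_cSup_iff[OF False Sbdd] x0_def by blast
      then show ?thesis using down xx by blast
    qed
    have right: "-s \<le> \<sigma> \<and> ?D x \<sigma> \<le> 0" if "x0 < x" "\<sigma> \<in> ?M x" for x \<sigma>
    proof -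
      have "x \<notin> S" using cSup_upper[OF _ Sbdd, of x] that(1) x0_def by auto
      then show ?thesis using that x0ge unfolding S_def by auto
    qed
    define e :: "nat \<Rightarrow> real" where "e n = inverse (real (Suc n))" for n
    have e_lim: "e \<longlonglongrightarrow> 0" unfolding e_def by (rule LIMSEQ_inverse_real_of_nat)
    have e_pos: "0 < e n" for n unfolding e_def by simp
    have e_le1: "e n \<le> 1" for n unfolding e_def by (simp add: inverse_le_1_iff)
    have e_dec: "e (Suc n) < e n" for n unfolding e_def by (simp add: field_simps)
    obtain \<sigma>1 where s1: "\<sigma>1 \<in> ?M x0" and Lc: "\<sigma>1 \<le> -s \<or> 0 \<le> ?D x0 \<sigma>1"
    proof (cases "x0 \<in> S")
      case True
      then obtain \<sigma> where "\<sigma> \<in> ?M x0" "\<sigma> < -s \<or> 0 < ?D x0 \<sigma>" unfolding S_def by blast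
      then show ?thesis using that by force
    next
      case False
      have x0pos: "0 < x0" using False y0 y0le y0ge by (cases "y0 = x0") auto
      define xs where "xs n = x0 - x0 * e n / 2" for n
      have xs_lt: "xs n < x0" for n using x0pos e_pos[of n] unfolding xs_def by simp
      have xs_ge: "0 \<le> xs n" for n
      proof -
        have "x0 * e n \<le> x0 * 1" using x0pos e_le1[of n] by (intro mult_left_mono) auto
        then show ?thesis unfolding xs_def using x0pos by simp
      qed
      have xs_inc: "xs n < xs (Suc n)" for n
        using x0pos e_dec[of n] unfolding xs_def by simp
      have xs_lim: "xs \<longlonglongrightarrow> x0"
      proof -
        have "(\<lambda>n. x0 - x0 * e n / 2) \<longlonglongrightarrow> x0 - x0 * 0 / 2"
          by (intro tendsto_intros e_lim) auto
        then show ?thesis unfolding xs_def by simp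
      qed
      define \<sigma>s where "\<sigma>s n = (SOME \<sigma>. \<sigma> \<in> ?M (xs n))" for n
      have sm: "\<sigma>s n \<in> ?M (xs n)" for n
        unfolding \<sigma>s_def using ne[OF xs_ge[of n]] by (simp add: some_in_eq)
      have inc: "incseq \<sigma>s"
        by (rule incseq_SucI, rule Mset_mono[OF Bm xs_inc sm sm])
      obtain \<nu> where nu: "\<nu> \<in> ?M x0" using ne[OF x0ge] by auto
      have bdd: "bdd_above (range \<sigma>s)"
        using Mset_mono[OF Bm xs_lt sm nu] by (intro bdd_aboveI[of _ \<nu>]) auto
      define \<sigma>L where "\<sigma>L = (SUP n. \<sigma>s n)"
      have lim: "\<sigma>s \<longlonglongrightarrow> \<sigma>L" unfolding \<sigma>L_def by (rule LIMSEQ_incseq_SUP[OF bdd inc])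
      have mem: "\<sigma>L \<in> ?M x0" by (rule Mset_closed[OF cA cB lim xs_lim sm])
      have "\<sigma>L \<le> -s \<or> 0 \<le> ?D x0 \<sigma>L"
      proof (cases "\<sigma>L \<le> -s")
        case False
        then have ev: "eventually (\<lambda>n. -s < \<sigma>s n) sequentially"
          using order_tendstoD(1)[OF lim] by simp
        have "eventually (\<lambda>n. 0 \<le> ?D (xs n) (\<sigma>s n)) sequentially"
          using ev
        proof eventually_elim
          case (elim n)
          then show ?case using left[OF xs_ge xs_lt sm, of n] by simp
        qed
        then have "0 \<le> ?D x0 \<sigma>L"
          by (intro tendsto_lowerbound[OF Dfun_tendsto[OF lim xs_lim]]) auto
        then show ?thesis by simp
      qed simp
      then show ?thesis using that mem by blast
    qed
    obtain \<sigma>2 where s2: "\<sigma>2 \<in> ?M x0" and s12: "\<sigma>1 \<le> \<sigma>2" and Rc: "-s \<le> \<sigma>2" "?D x0 \<sigma>2 \<le> 0"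
    proof (cases "x0 \<in> S")
      case False
      then have "-s \<le> \<sigma>1 \<and> ?D x0 \<sigma>1 \<le> 0" using s1 x0ge unfolding S_def by auto
      then show ?thesis using that s1 by blast
    next
      case True
      define xs where "xs n = x0 + e n" for n
      have xs_gt: "x0 < xs n" for n using e_pos[of n] unfolding xs_def by simp
      have xs_ge: "0 \<le> xs n" for n using xs_gt[of n] x0ge by simp
      have xs_dec: "xs (Suc n) < xs n" for n using e_dec[of n] unfolding xs_def by simp
      have xs_lim: "xs \<longlonglongrightarrow> x0"
      proof -
        have "(\<lambda>n. x0 + e n) \<longlonglongrightarrow> x0 + 0" by (intro tendsto_intros e_lim)
        then show ?thesis unfolding xs_def by simp
      qed
      define \<sigma>s where "\<sigma>s n = (SOME \<sigma>. \<sigma> \<in> ?M (xs n))" for n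
      have sm: "\<sigma>s n \<in> ?M (xs n)" for n
        unfolding \<sigma>s_def using ne[OF xs_ge[of n]] by (simp add: some_in_eq)
      have dec: "decseq \<sigma>s"
        by (rule decseq_SucI, rule Mset_mono[OF Bm xs_dec sm sm])
      have lb: "\<sigma>1 \<le> \<sigma>s n" for n using Mset_mono[OF Bm xs_gt s1 sm] .
      have bdd: "bdd_below (range \<sigma>s)" using lb by (intro bdd_belowI[of _ \<sigma>1]) auto
      define \<sigma>R where "\<sigma>R = (INF n. \<sigma>s n)"
      have lim: "\<sigma>s \<longlonglongrightarrow> \<sigma>R" unfolding \<sigma>R_def by (rule LIMSEQ_decseq_INF[OF bdd dec])
      have mem: "\<sigma>R \<in> ?M x0" by (rule Mset_closed[OF cA cB lim xs_lim sm])
      have "\<sigma>1 \<le> \<sigma>R" by (rule LIMSEQ_le_const[OF lim]) (use lb in auto)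
      moreover have "-s \<le> \<sigma>R" by (rule LIMSEQ_le_const[OF lim]) (use right[OF xs_gt sm] in auto)
      moreover have "?D x0 \<sigma>R \<le> 0"
        by (rule LIMSEQ_le_const2[OF Dfun_tendsto[OF lim xs_lim]]) (use right[OF xs_gt sm] in auto)
      ultimately show ?thesis using that mem by blast
    qed
    define lo where "lo = max \<sigma>1 (-s)"
    have Dms: "?D x0 (-s) = a * (t0 - s)" using s by (simp add: Dfun_neg)
    have Dlo: "0 \<le> ?D x0 lo"
    proof (cases "\<sigma>1 \<ge> -s")
      case True
      then show ?thesis using Lc Dms s a unfolding lo_def by (cases "\<sigma>1 = -s") auto
    next
      case False
      then show ?thesis using Dms s a unfolding lo_def by simp
    qed
    have lo2: "lo \<le> \<sigma>2" using s12 Rc unfolding lo_def by simp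
    obtain \<sigma> where "lo \<le> \<sigma>" "\<sigma> \<le> \<sigma>2" "?D x0 \<sigma> = 0"
      using IVT2'[of "?D x0" \<sigma>2 0 lo, OF Rc(2) Dlo lo2 Dfun_cont] by blast
    then have "\<sigma>1 \<le> \<sigma> \<and> \<sigma> \<le> \<sigma>2 \<and> -s \<le> \<sigma> \<and> ?D x0 \<sigma> = 0" unfolding lo_def by simp
    then show ?thesis using x0ge s1 s2 by blast
  qed
qed


lemma integral_pos_open:
  fixes f :: "real \<Rightarrow> real"
  assumes f: "f integrable_on {c..d}" and cd: "c < d" and nn: "\<And>x. x \<in> {c..d} \<Longrightarrow> 0 \<le> f x"
    and pos: "\<And>x. x \<in> {c<..<d} \<Longrightarrow> 0 < f x"
  shows "0 < integral {c..d} f"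
proof -
  have ge: "0 \<le> integral {c..d} f" by (rule integral_nonneg[OF f]) (use nn in auto)
  have af: "f absolutely_integrable_on {c..d}" by (rule nonnegative_absolutely_integrable_1[OF f nn])
  have eq: "set_lebesgue_integral lebesgue {c..d} f = integral {c..d} f"
    using af by (simp add: absolutely_integrable_on_def set_lebesgue_integral_eq_integral(2))
  show ?thesis
  proof (rule ccontr)
    assume "\<not> 0 < integral {c..d} f"
    then have z: "integral {c..d} f = 0" using ge by simp
    have "integral\<^sup>L lebesgue (\<lambda>x. indicator {c..d} x *\<^sub>R f x) = 0"
      using eq z unfolding set_lebesgue_integral_def by simp
    moreover have "integrable lebesgue (\<lambda>x. indicator {c..d} x *\<^sub>R f x)"
      using af by (simp add: absolutely_integrable_on_def set_integrable_def)
    ultimately have "AE x in lebesgue. indicator {c..d} x *\<^sub>R f x = 0"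
      using integral_nonneg_eq_0_iff_AE[of lebesgue "\<lambda>x. indicator {c..d} x *\<^sub>R f x"] nn
      by (auto simp: indicator_def)
    then have "AE x in lebesgue. x \<notin> {c<..<d}"
      by eventually_elim (use pos in \<open>fastforce simp: indicator_def\<close>)
    then have "{c<..<d} \<in> null_sets lebesgue"
      by (subst AE_iff_null_sets) auto
    then have "emeasure lebesgue {c<..<d} = 0" by auto
    moreover have "emeasure lebesgue {c<..<d} = ennreal (d - c)"
      using cd by simp
    ultimately show False using cd by simp
  qed
qed

lemma meas_restrict:
  fixes f :: "real \<Rightarrow> real"
  assumes "set_borel_measurable borel {0..} f"
  shows "f \<in> borel_measurable (lebesgue_on {0..y})"
proof -
  have g: "(\<lambda>x. indicator {0..} x *\<^sub>R f x) \<in> borel_measurable borel"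
    using assms by (simp add: set_borel_measurable_def)
  then have g2: "(\<lambda>x. indicator {0..} x *\<^sub>R f x) \<in> borel_measurable lborel"
    by simp
  then have g3: "(\<lambda>x. indicator {0..} x *\<^sub>R f x) \<in> borel_measurable lebesgue"
    by (rule measurable_completion)
  have "(\<lambda>x. indicator {0..y} x *\<^sub>R (indicator {0..} x *\<^sub>R f x)) \<in> borel_measurable lebesgue"
    by (intro borel_measurable_scaleR g3 borel_measurable_indicator) simp
  moreover have "(\<lambda>x. indicator {0..y} x *\<^sub>R (indicator {0..} x *\<^sub>R f x)) = (\<lambda>x. indicator {0..y} x *\<^sub>R f x)"
    by (auto simp: indicator_def fun_eq_iff)
  ultimately have "(\<lambda>x. indicator {0..y} x *\<^sub>R f x) \<in> borel_measurable lebesgue" by simp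
  then show ?thesis
    by (subst borel_measurable_restrict_space_iff) auto
qed

lemma bdd_integrable:
  fixes f :: "real \<Rightarrow> real"
  assumes "f \<in> borel_measurable (lebesgue_on {0..y})" "\<And>x. x \<in> {0..y} \<Longrightarrow> \<bar>f x\<bar> \<le> M"
  shows "f integrable_on {0..y}"
  by (rule measurable_bounded_by_integrable_imp_integrable[OF assms(1), of "\<lambda>_. M"])
     (use assms(2) in auto)

lemma integral_upto_zero:
  fixes y :: real and f :: "real \<Rightarrow> real"
  assumes "y \<le> 0" shows "integral {0..y} f = 0"
proof (cases "y = 0")
  case True then show ?thesis by simp
next
  case False then have "{0..y} = {}" using assms by auto
  then show ?thesis by simp
qed

lemma isCont_integral_upto:
  fixes f :: "real \<Rightarrow> real"
  assumes f: "\<And>y. f integrable_on {0..y}"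
  shows "isCont (\<lambda>y. integral {0..y} f) z"
proof -
  define b where "b = \<bar>z\<bar> + 1"
  have b: "0 < b" unfolding b_def by simp
  have c1: "continuous_on {-b..0} (\<lambda>y. integral {0..y} f)"
    by (rule continuous_on_cong[THEN iffD2, OF refl _ continuous_on_const[of _ 0]])
       (simp add: integral_upto_zero)
  have c2: "continuous_on {0..b} (\<lambda>y. integral {0..y} f)"
    by (rule indefinite_integral_continuous_1[OF f])
  have "continuous_on ({-b..0} \<union> {0..b}) (\<lambda>y. integral {0..y} f)"
    by (rule continuous_on_closed_Un[OF _ _ c1 c2]) auto
  moreover have "{-b..0} \<union> {0..b} = {-b..b}" using b by auto
  ultimately have "continuous_on {-b..b} (\<lambda>y. integral {0..y} f)" by simp
  moreover have "z \<in> interior {-b..b}" unfolding b_def by auto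
  ultimately show ?thesis by (meson continuous_on_interior)
qed

lemma integral_split0:
  fixes f :: "real \<Rightarrow> real" and c d :: real
  assumes "f integrable_on {0..d}" "0 \<le> c" "c \<le> d"
  shows "integral {0..d} f - integral {0..c} f = integral {c..d} f"
  using Henstock_Kurzweil_Integration.integral_combine[where a=0 and c=c and b=d and f=f] assms by simp


lemma integral_cmult: "integral S (\<lambda>\<eta>. (c::real) * f \<eta>) = c * integral S (f :: real \<Rightarrow> real)"
  using integral_cmul[of S c f] by simp

lemma int_cmult: "f integrable_on S \<Longrightarrow> (\<lambda>\<eta>. (c::real) * f \<eta>) integrable_on S"
  using integrable_on_cmult_left[of f S c] by simp

lemma meas_id: "(\<lambda>x::real. x) \<in> borel_measurable (lebesgue_on S)"
proof -
  have "(\<lambda>x::real. x) \<in> borel_measurable lborel" by simp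
  then have "(\<lambda>x::real. x) \<in> borel_measurable lebesgue" by (rule measurable_completion)
  then show ?thesis by (rule measurable_restrict_space1)
qed

locale setting =
  fixes u0 ub rho0 rhob :: "real \<Rightarrow> real" and t0 :: real
  assumes u0_meas: "set_borel_measurable borel {0..} u0"
      and u0_bdd: "\<exists>M. \<forall>x\<ge>0. \<bar>u0 x\<bar> \<le> M"
      and ub_meas: "set_borel_measurable borel {0..} ub"
      and ub_bdd: "\<exists>M. \<forall>x\<ge>0. \<bar>ub x\<bar> \<le> M"
      and ub_pos: "\<forall>x\<ge>0. ub x > 0"
      and rho0_meas: "set_borel_measurable borel {0..} rho0"
      and rho0_pos: "\<forall>x\<ge>0. rho0 x > 0"
      and rho0_locbdd: "\<forall>b\<ge>0. \<exists>M. \<forall>x\<in>{0..b}. \<bar>rho0 x\<bar> \<le> M"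
      and rhob_meas: "set_borel_measurable borel {0..} rhob"
      and rhob_pos: "\<forall>x\<ge>0. rhob x > 0"
      and rhob_locbdd: "\<forall>b\<ge>0. \<exists>M. \<forall>x\<in>{0..b}. \<bar>rhob x\<bar> \<le> M"
      and t0_pos: "t0 > 0"
begin

definition "Mu = (SOME M. \<forall>x\<ge>0. \<bar>u0 x\<bar> \<le> M)"
definition "Mb = (SOME M. \<forall>x\<ge>0. \<bar>ub x\<bar> \<le> M)"

lemma Mu: "x \<ge> 0 \<Longrightarrow> \<bar>u0 x\<bar> \<le> Mu"
  using someI_ex[OF u0_bdd] unfolding Mu_def by blast
lemma Mb: "x \<ge> 0 \<Longrightarrow> \<bar>ub x\<bar> \<le> Mb"
  using someI_ex[OF ub_bdd] unfolding Mb_def by blast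
lemma Mu0: "0 \<le> Mu" using Mu[of 0] by simp
lemma Mb0: "0 \<le> Mb" using Mb[of 0] by simp

lemma intF: "(\<lambda>\<eta>. (t0 * u0 \<eta> + \<eta> - x) * rho0 \<eta>) integrable_on {0..y}"
proof (cases "y < 0")
  case True then show ?thesis by (simp add: integrable_on_empty)
next
  case False
  obtain R where R: "\<forall>z\<in>{0..y}. \<bar>rho0 z\<bar> \<le> R" using rho0_locbdd False by force
  have m: "(\<lambda>\<eta>. (t0 * u0 \<eta> + \<eta> - x) * rho0 \<eta>) \<in> borel_measurable (lebesgue_on {0..y})"
    by (intro borel_measurable_times borel_measurable_add borel_measurable_diff borel_measurable_const meas_id
        meas_restrict[OF u0_meas] meas_restrict[OF rho0_meas])
  show ?thesis
  proof (rule bdd_integrable[OF m])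
    fix z assume z: "z \<in> {0..y}"
    have "\<bar>t0 * u0 z + z - x\<bar> \<le> t0 * Mu + y + \<bar>x\<bar>"
    proof -
      have "\<bar>t0 * u0 z\<bar> \<le> t0 * Mu" using Mu[of z] z t0_pos by (simp add: abs_mult mult_left_mono)
      then show ?thesis using z by (simp add: abs_le_iff) linarith?
    qed
    moreover have "\<bar>rho0 z\<bar> \<le> R" using R z by blast
    ultimately show "\<bar>(t0 * u0 z + z - x) * rho0 z\<bar> \<le> (t0 * Mu + y + \<bar>x\<bar>) * R"
      unfolding abs_mult by (intro mult_mono) auto
  qed
qed

lemma intG: "(\<lambda>\<eta>. (x - ub \<eta> * (t0 - \<eta>)) * rhob \<eta> * ub \<eta>) integrable_on {0..y}"
proof (cases "y < 0")
  case True then show ?thesis by (simp add: integrable_on_empty)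
next
  case False
  obtain R where R: "\<forall>z\<in>{0..y}. \<bar>rhob z\<bar> \<le> R" using rhob_locbdd False by force
  have m: "(\<lambda>\<eta>. (x - ub \<eta> * (t0 - \<eta>)) * rhob \<eta> * ub \<eta>) \<in> borel_measurable (lebesgue_on {0..y})"
    by (intro borel_measurable_times borel_measurable_add borel_measurable_diff borel_measurable_const meas_id
        meas_restrict[OF ub_meas] meas_restrict[OF rhob_meas])
  show ?thesis
  proof (rule bdd_integrable[OF m])
    fix z assume z: "z \<in> {0..y}"
    have u: "\<bar>ub z\<bar> \<le> Mb" using Mb[of z] z by simp
    have "\<bar>ub z * (t0 - z)\<bar> \<le> Mb * (t0 + y)"
      unfolding abs_mult using u z t0_pos by (intro mult_mono) auto
    then have "\<bar>x - ub z * (t0 - z)\<bar> \<le> \<bar>x\<bar> + Mb * (t0 + y)" by linarith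
    moreover have "\<bar>rhob z\<bar> \<le> R" using R z by blast
    ultimately have "\<bar>(x - ub z * (t0 - z)) * rhob z\<bar> \<le> (\<bar>x\<bar> + Mb * (t0 + y)) * R"
      unfolding abs_mult by (intro mult_mono) auto
    then show "\<bar>(x - ub z * (t0 - z)) * rhob z * ub z\<bar> \<le> (\<bar>x\<bar> + Mb * (t0 + y)) * R * Mb"
      using u unfolding abs_mult[of _ "ub z"] by (intro mult_mono) auto
  qed
qed

lemma int_rho0: "rho0 integrable_on {0..y}"
  using integrable_diff[OF intF[of 0 y] intF[of 1 y]] by (simp add: algebra_simps)

lemma int_gb: "(\<lambda>\<eta>. rhob \<eta> * ub \<eta>) integrable_on {0..y}"
  using integrable_diff[OF intG[of 1 y] intG[of 0 y]] by (simp add: algebra_simps)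

definition "FA y = Fint u0 rho0 y 0 t0"
definition "FB y = integral {0..y} rho0"
definition "GA y = - Gint ub rhob y 0 t0"
definition "GB y = integral {0..y} (\<lambda>\<eta>. rhob \<eta> * ub \<eta>)"
definition "AA \<sigma> = FA \<sigma> - GA (-\<sigma>)"
definition "BB \<sigma> = FB \<sigma> - GB (-\<sigma>)"
definition "CC \<sigma> x = Fint u0 rho0 \<sigma> x t0 + Gint ub rhob (-\<sigma>) x t0"

lemma Fint_eq: "Fint u0 rho0 y x t0 = FA y - x * FB y"
proof -
  have "(\<lambda>\<eta>. (t0 * u0 \<eta> + \<eta> - x) * rho0 \<eta>) = (\<lambda>\<eta>. (t0 * u0 \<eta> + \<eta> - 0) * rho0 \<eta> - x * rho0 \<eta>)"
    by (simp add: fun_eq_iff algebra_simps)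
  moreover have "integral {0..y} (\<lambda>\<eta>. (t0 * u0 \<eta> + \<eta> - 0) * rho0 \<eta> - x * rho0 \<eta>) = integral {0..y} (\<lambda>\<eta>. (t0 * u0 \<eta> + \<eta> - 0) * rho0 \<eta>) - integral {0..y} (\<lambda>\<eta>. x * rho0 \<eta>)"
    by (rule Henstock_Kurzweil_Integration.integral_diff[OF intF[of 0 y] int_cmult[OF int_rho0]])
  ultimately show ?thesis
    unfolding Fint_def FA_def FB_def integral_cmult by simp
qed

lemma Gint_eq: "Gint ub rhob y x t0 = x * GB y - GA y"
proof -
  have "(\<lambda>\<eta>. (x - ub \<eta> * (t0 - \<eta>)) * rhob \<eta> * ub \<eta>) = (\<lambda>\<eta>. (0 - ub \<eta> * (t0 - \<eta>)) * rhob \<eta> * ub \<eta> + x * (rhob \<eta> * ub \<eta>))"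
    by (simp add: fun_eq_iff algebra_simps)
  moreover have "integral {0..y} (\<lambda>\<eta>. (0 - ub \<eta> * (t0 - \<eta>)) * rhob \<eta> * ub \<eta> + x * (rhob \<eta> * ub \<eta>)) = integral {0..y} (\<lambda>\<eta>. (0 - ub \<eta> * (t0 - \<eta>)) * rhob \<eta> * ub \<eta>) + integral {0..y} (\<lambda>\<eta>. x * (rhob \<eta> * ub \<eta>))"
    by (rule Henstock_Kurzweil_Integration.integral_add[OF intG[of 0 y] int_cmult[OF int_gb]])
  ultimately show ?thesis
    unfolding Gint_def GA_def GB_def integral_cmult by simp
qed

lemma CC_eq: "CC \<sigma> x = AA \<sigma> - x * BB \<sigma>"
  unfolding CC_def AA_def BB_def Fint_eq Gint_eq by (simp add: algebra_simps)

lemma Mset_iff: "\<sigma> \<in> Mset AA BB x \<longleftrightarrow> (\<forall>z. CC \<sigma> x \<le> CC z x)"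
  unfolding Mset_def CC_eq by simp

lemma Fint_neg: "y \<le> 0 \<Longrightarrow> Fint u0 rho0 y x t0 = 0"
  unfolding Fint_def by (rule integral_upto_zero)
lemma Gint_neg: "y \<le> 0 \<Longrightarrow> Gint ub rhob y x t0 = 0"
  unfolding Gint_def by (rule integral_upto_zero)

lemma CC_pos: "0 \<le> \<sigma> \<Longrightarrow> CC \<sigma> x = Fint u0 rho0 \<sigma> x t0"
  unfolding CC_def by (simp add: Gint_neg)
lemma CC_neg: "0 \<le> \<tau> \<Longrightarrow> CC (-\<tau>) x = Gint ub rhob \<tau> x t0"
  unfolding CC_def by (simp add: Fint_neg)

lemma isCont_FA: "isCont FA z" unfolding FA_def Fint_def by (rule isCont_integral_upto[OF intF])
lemma isCont_FB: "isCont FB z" unfolding FB_def by (rule isCont_integral_upto[OF int_rho0])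
lemma isCont_GA: "isCont GA z" unfolding GA_def Gint_def
  by (intro continuous_intros isCont_integral_upto[OF intG])
lemma isCont_GB: "isCont GB z" unfolding GB_def by (rule isCont_integral_upto[OF int_gb])

lemma isCont_AA: "isCont AA z"
  unfolding AA_def by (intro continuous_intros isCont_FA isCont_o2[OF _ isCont_GA])
lemma isCont_BB: "isCont BB z"
  unfolding BB_def by (intro continuous_intros isCont_FB isCont_o2[OF _ isCont_GB])

lemma pos_integral_mono:
  fixes h :: "real \<Rightarrow> real"
  assumes int: "\<And>y. h integrable_on {0..y}" and pos: "\<And>y. 0 \<le> y \<Longrightarrow> 0 < h y"
  shows "\<And>c d. 0 \<le> c \<Longrightarrow> c < d \<Longrightarrow> integral {0..c} h < integral {0..d} h"
    and "\<And>y. 0 \<le> integral {0..y} h"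
proof -
  fix c d :: real assume c: "0 \<le> c" "c < d"
  have "integral {0..d} h - integral {0..c} h = integral {c..d} h"
    by (rule integral_split0[OF int]) (use c in auto)
  moreover have "0 < integral {c..d} h"
  proof (rule integral_pos_open)
    show "h integrable_on {c..d}"
      by (rule integrable_subinterval_real[OF int[of d]]) (use c in auto)
  next
    show "\<And>x. x \<in> {c..d} \<Longrightarrow> 0 \<le> h x" using c pos by (meson atLeastAtMost_iff less_imp_le order_trans)
  next
    show "\<And>x. x \<in> {c<..<d} \<Longrightarrow> 0 < h x" using c pos by auto
  qed (use c in auto)
  ultimately show "integral {0..c} h < integral {0..d} h" by simp
next
  fix y :: real
  show "0 \<le> integral {0..y} h"
  proof (cases "0 \<le> y")
    case True then show ?thesis by (intro integral_nonneg int) (auto intro: less_imp_le pos)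
  next
    case False then show ?thesis by (simp add: integral_upto_zero)
  qed
qed

lemma FB_strict: "0 \<le> c \<Longrightarrow> c < d \<Longrightarrow> FB c < FB d"
  unfolding FB_def by (rule pos_integral_mono(1)[OF int_rho0]) (use rho0_pos in auto)
lemma GB_strict: "0 \<le> c \<Longrightarrow> c < d \<Longrightarrow> GB c < GB d"
  unfolding GB_def by (rule pos_integral_mono(1)[OF int_gb]) (use rhob_pos ub_pos in auto)
lemma GB_nonneg: "0 \<le> GB y"
  unfolding GB_def by (rule pos_integral_mono(2)[OF int_gb]) (use rhob_pos ub_pos in auto)
lemma FB_zero: "y \<le> 0 \<Longrightarrow> FB y = 0" unfolding FB_def by (rule integral_upto_zero)
lemma GB_zero: "y \<le> 0 \<Longrightarrow> GB y = 0" unfolding GB_def by (rule integral_upto_zero)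

lemma BB_strict: "strict_mono BB"
proof (rule strict_monoI)
  fix \<sigma> \<sigma>' :: real assume lt: "\<sigma> < \<sigma>'"
  show "BB \<sigma> < BB \<sigma>'"
  proof (cases "0 < \<sigma>'")
    case True
    have "FB \<sigma> < FB \<sigma>'"
    proof (cases "0 \<le> \<sigma>")
      case True then show ?thesis using FB_strict lt by simp
    next
      case False then have "FB \<sigma> = FB 0" by (simp add: FB_zero)
      then show ?thesis using FB_strict[of 0 \<sigma>'] \<open>0 < \<sigma>'\<close> by simp
    qed
    moreover have "GB (-\<sigma>') = 0" using True by (simp add: GB_zero)
    ultimately show ?thesis unfolding BB_def using GB_nonneg[of "-\<sigma>"] by simp
  next
    case False
    then have "FB \<sigma> = 0" "FB \<sigma>' = 0" using lt by (auto simp: FB_zero)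
    moreover have "GB (-\<sigma>') < GB (-\<sigma>)" using GB_strict[of "-\<sigma>'" "-\<sigma>"] False lt by simp
    ultimately show ?thesis unfolding BB_def by simp
  qed
qed

end

lemma seg_x:
  fixes H :: "(real \<times> real) set"
  assumes H: "convex H" and p: "(p,0) \<in> H" and q: "(q,0) \<in> H" and le: "p \<le> \<sigma>" "\<sigma> \<le> q"
  shows "(\<sigma>, 0) \<in> H"
proof (cases "p = q")
  case True then show ?thesis using p le by simp
next
  case False
  then have pq: "p < q" using le by simp
  define u where "u = (q - \<sigma>)/(q - p)"
  define v where "v = (\<sigma> - p)/(q - p)"
  have uv: "u + v = 1" unfolding u_def v_def using pq by (simp add: add_divide_distrib[symmetric])
  have "u *\<^sub>R (p,0) + v *\<^sub>R (q,0) \<in> H"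
    by (rule convexD[OF H p q]) (use pq le uv in \<open>auto simp: u_def v_def\<close>)
  moreover have "u *\<^sub>R (p,0) + v *\<^sub>R (q,(0::real)) = (\<sigma>, 0)"
  proof -
    have nz: "q - p \<noteq> 0" using pq by simp
    have "u * p + v * q = ((q-\<sigma>)*p + (\<sigma>-p)*q)/(q-p)" unfolding u_def v_def by (simp add: add_divide_distrib)
    also have "(q-\<sigma>)*p + (\<sigma>-p)*q = \<sigma>*(q-p)" by (simp add: algebra_simps)
    finally have "u * p + v * q = \<sigma>" using nz by simp
    then show ?thesis by simp
  qed
  ultimately show ?thesis by simp
qed

lemma seg_y:
  fixes H :: "(real \<times> real) set"
  assumes H: "convex H" and p: "(0,p) \<in> H" and q: "(0,q) \<in> H" and le: "p \<le> \<sigma>" "\<sigma> \<le> q"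
  shows "(0, \<sigma>) \<in> H"
proof (cases "p = q")
  case True then show ?thesis using p le by simp
next
  case False
  then have pq: "p < q" using le by simp
  define u where "u = (q - \<sigma>)/(q - p)"
  define v where "v = (\<sigma> - p)/(q - p)"
  have uv: "u + v = 1" unfolding u_def v_def using pq by (simp add: add_divide_distrib[symmetric])
  have "u *\<^sub>R (0,p) + v *\<^sub>R (0,q) \<in> H"
    by (rule convexD[OF H p q]) (use pq le uv in \<open>auto simp: u_def v_def\<close>)
  moreover have "u *\<^sub>R ((0::real),p) + v *\<^sub>R (0,q) = (0, \<sigma>)"
  proof -
    have nz: "q - p \<noteq> 0" using pq by simp
    have "u * p + v * q = ((q-\<sigma>)*p + (\<sigma>-p)*q)/(q-p)" unfolding u_def v_def by (simp add: add_divide_distrib)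
    also have "(q-\<sigma>)*p + (\<sigma>-p)*q = \<sigma>*(q-p)" by (simp add: algebra_simps)
    finally have "u * p + v * q = \<sigma>" using nz by simp
    then show ?thesis by simp
  qed
  ultimately show ?thesis by simp
qed

lemma point_in:
  fixes H :: "(real \<times> real) set"
  assumes H: "convex H" and V: "(x,t0) \<in> H" and s: "0 \<le> s" "s < t0" and ss: "-s \<le> \<sigma>"
    and D: "Dfun t0 a s x \<sigma> = 0"
    and Qp: "0 \<le> \<sigma> \<Longrightarrow> (\<sigma>,0) \<in> H" and Qn: "\<sigma> < 0 \<Longrightarrow> (0,-\<sigma>) \<in> H"
  shows "(a,s) \<in> H"
proof (cases "0 \<le> \<sigma>")
  case True
  have t0: "0 < t0" using s by simp
  have "(s/t0) *\<^sub>R (x,t0) + (1 - s/t0) *\<^sub>R (\<sigma>,0) \<in> H"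
    by (rule convexD[OF H V Qp[OF True]]) (use s t0 in auto)
  moreover have "t0*a - s*x - (t0-s)*\<sigma> = 0" using D True by (simp add: Dfun_pos)
  then have "(s/t0) *\<^sub>R (x,t0) + (1 - s/t0) *\<^sub>R (\<sigma>,(0::real)) = (a, s)"
    using t0 by (simp add: field_simps)
  ultimately show ?thesis by simp
next
  case False
  define \<tau> where "\<tau> = -\<sigma>"
  have tau: "0 < \<tau>" "\<tau> \<le> s" using False ss by (auto simp: \<tau>_def)
  define \<mu> where "\<mu> = (s - \<tau>)/(t0 - \<tau>)"
  have den: "0 < t0 - \<tau>" using tau s by simp
  have mu: "0 \<le> \<mu>" "\<mu> \<le> 1" using tau s den by (auto simp: \<mu>_def field_simps)
  have "\<mu> *\<^sub>R (x,t0) + (1 - \<mu>) *\<^sub>R (0,\<tau>) \<in> H"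
    by (rule convexD[OF H V]) (use Qn False mu in \<open>auto simp: \<tau>_def\<close>)
  moreover have "a*(t0-\<tau>) - x*(s-\<tau>) = 0" using D False by (simp add: Dfun_neg \<tau>_def)
  then have eq: "a*(t0-\<tau>) = x*(s-\<tau>)" by simp
  have e1: "\<mu>*x = a" using den eq unfolding \<mu>_def by (simp add: field_simps)
  have e2: "\<mu>*t0 + (1-\<mu>)*\<tau> = s"
  proof -
    have "\<mu>*t0 + (1-\<mu>)*\<tau> = \<tau> + \<mu>*(t0-\<tau>)" by (simp add: algebra_simps)
    also have "\<mu>*(t0-\<tau>) = s - \<tau>" using den unfolding \<mu>_def by simp
    finally show ?thesis by simp
  qed
  have "\<mu> *\<^sub>R (x,t0) + (1 - \<mu>) *\<^sub>R ((0::real),\<tau>) = (\<mu>*x, \<mu>*t0 + (1-\<mu>)*\<tau>)" by simp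
  then have "\<mu> *\<^sub>R (x,t0) + (1 - \<mu>) *\<^sub>R ((0::real),\<tau>) = (a, s)" using e1 e2 by simp
  ultimately show ?thesis by simp
qed

lemma point_in0:
  fixes H :: "(real \<times> real) set"
  assumes H: "convex H" and V: "(0,t0) \<in> H" and O: "(0,0) \<in> H" and Q: "(\<sigma>,0) \<in> H"
    and s: "0 \<le> s" "s < t0" and a: "0 \<le> a" and D: "Dfun t0 a s 0 \<sigma> \<le> 0" and sg: "0 \<le> \<sigma>"
  shows "(a,s) \<in> H"
proof -
  have t0: "0 < t0" using s by simp
  define w where "w = a * t0 / (t0 - s)"
  have "t0*a - (t0-s)*\<sigma> \<le> 0" using D sg by (simp add: Dfun_pos)
  then have w: "0 \<le> w" "w \<le> \<sigma>" using s a by (auto simp: w_def field_simps)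
  have W: "(w,0) \<in> H" by (rule seg_x[OF H O Q w])
  have "(s/t0) *\<^sub>R (0,t0) + (1 - s/t0) *\<^sub>R (w,0) \<in> H"
    by (rule convexD[OF H V W]) (use s t0 in auto)
  moreover have "(s/t0) *\<^sub>R ((0::real),t0) + (1 - s/t0) *\<^sub>R (w,(0::real)) = (a, s)"
    using t0 s by (simp add: w_def field_simps)
  ultimately show ?thesis by simp
qed


lemma argmin_exists:
  fixes f :: "real \<Rightarrow> real"
  assumes cont: "\<And>y. isCont f y" and Y: "0 \<le> Y" and inc: "\<And>c d. Y \<le> c \<Longrightarrow> c < d \<Longrightarrow> f c < f d"
  shows "\<exists>y. 0 \<le> y \<and> y \<le> Y \<and> (\<forall>z\<ge>0. f y \<le> f z)"
proof -
  have "continuous_on {0..Y} f" by (intro continuous_at_imp_continuous_on ballI cont)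
  then obtain y0 where y0: "y0 \<in> {0..Y}" and m: "\<forall>y\<in>{0..Y}. f y0 \<le> f y"
    using continuous_attains_inf[of "{0..Y}" f] Y by auto
  have "\<forall>z\<ge>0. f y0 \<le> f z"
  proof (intro allI impI)
    fix z :: real assume z: "0 \<le> z"
    show "f y0 \<le> f z"
    proof (cases "z \<le> Y")
      case True then show ?thesis using m z by auto
    next
      case False
      then have "f Y < f z" using inc[of Y z] by simp
      moreover have "f y0 \<le> f Y" using m Y by auto
      ultimately show ?thesis by simp
    qed
  qed
  then show ?thesis using y0 by auto
qed

lemma argmin_bound:
  fixes f :: "real \<Rightarrow> real"
  assumes Y: "0 \<le> Y" and inc: "\<And>c d. Y \<le> c \<Longrightarrow> c < d \<Longrightarrow> f c < f d"
    and y: "\<forall>z\<ge>0. f y \<le> f z"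
  shows "y \<le> Y"
proof (rule ccontr)
  assume "\<not> y \<le> Y"
  then have "f Y < f y" using inc[of Y y] by simp
  moreover have "f y \<le> f Y" using y Y by simp
  ultimately show False by simp
qed

context setting begin

definition "YF x = max 0 (x + t0 * Mu)"

lemma F_inc:
  assumes c: "YF x \<le> c" "c < d"
  shows "Fint u0 rho0 c x t0 < Fint u0 rho0 d x t0"
proof -
  let ?h = "\<lambda>\<eta>. (t0 * u0 \<eta> + \<eta> - x) * rho0 \<eta>"
  have c0: "0 \<le> c" "x + t0 * Mu \<le> c" using c unfolding YF_def by auto
  have "Fint u0 rho0 d x t0 - Fint u0 rho0 c x t0 = integral {c..d} ?h"
    unfolding Fint_def by (rule integral_split0[OF intF]) (use c c0 in auto)
  moreover have "0 < integral {c..d} ?h"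
  proof (rule integral_pos_open)
    show "?h integrable_on {c..d}"
      by (rule integrable_subinterval_real[OF intF[of x d]]) (use c0 in auto)
  next
    have key: "x + t0*Mu \<le> \<eta> \<Longrightarrow> 0 \<le> \<eta> \<Longrightarrow> \<eta> - (x + t0*Mu) \<le> t0 * u0 \<eta> + \<eta> - x" for \<eta>
    proof -
      assume "0 \<le> \<eta>"
      then have "- Mu \<le> u0 \<eta>" using Mu[of \<eta>] by linarith
      then have "t0 * (- Mu) \<le> t0 * u0 \<eta>" using t0_pos by (intro mult_left_mono) auto
      then show ?thesis by simp
    qed
    show "\<And>\<eta>. \<eta> \<in> {c..d} \<Longrightarrow> 0 \<le> ?h \<eta>"
    proof -
      fix \<eta> assume "\<eta> \<in> {c..d}"
      then have e: "0 \<le> \<eta>" "x + t0*Mu \<le> \<eta>" using c0 by auto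
      then have "0 \<le> t0 * u0 \<eta> + \<eta> - x" using key[OF e(2) e(1)] by linarith
      moreover have "0 < rho0 \<eta>" using rho0_pos e by auto
      ultimately show "0 \<le> ?h \<eta>" by simp
    qed
    show "\<And>\<eta>. \<eta> \<in> {c<..<d} \<Longrightarrow> 0 < ?h \<eta>"
    proof -
      fix \<eta> assume "\<eta> \<in> {c<..<d}"
      then have e: "0 \<le> \<eta>" "x + t0*Mu < \<eta>" using c0 by auto
      then have "0 < t0 * u0 \<eta> + \<eta> - x" using key[of \<eta>] by linarith
      moreover have "0 < rho0 \<eta>" using rho0_pos e by auto
      ultimately show "0 < ?h \<eta>" by simp
    qed
  qed (use c in auto)
  ultimately show ?thesis by simp
qed

lemma G_inc:
  assumes x: "0 \<le> x" and c: "t0 \<le> c" "c < d"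
  shows "Gint ub rhob c x t0 < Gint ub rhob d x t0"
proof -
  let ?h = "\<lambda>\<eta>. (x - ub \<eta> * (t0 - \<eta>)) * rhob \<eta> * ub \<eta>"
  have c0: "0 \<le> c" using c t0_pos by auto
  have "Gint ub rhob d x t0 - Gint ub rhob c x t0 = integral {c..d} ?h"
    unfolding Gint_def by (rule integral_split0[OF intG]) (use c c0 in auto)
  moreover have "0 < integral {c..d} ?h"
  proof (rule integral_pos_open)
    show "?h integrable_on {c..d}"
      by (rule integrable_subinterval_real[OF intG[of x d]]) (use c0 in auto)
  next
    show "\<And>\<eta>. \<eta> \<in> {c..d} \<Longrightarrow> 0 \<le> ?h \<eta>"
    proof -
      fix \<eta> assume "\<eta> \<in> {c..d}"
      then have e: "0 \<le> \<eta>" "t0 \<le> \<eta>" using c c0 by auto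
      have u: "0 < ub \<eta>" "0 < rhob \<eta>" using ub_pos rhob_pos e by auto
      have "ub \<eta> * (t0 - \<eta>) \<le> 0" using u e by (simp add: mult_nonneg_nonpos)
      then have "0 \<le> x - ub \<eta> * (t0 - \<eta>)" using x by linarith
      then show "0 \<le> ?h \<eta>" using u by simp
    qed
    show "\<And>\<eta>. \<eta> \<in> {c<..<d} \<Longrightarrow> 0 < ?h \<eta>"
    proof -
      fix \<eta> assume "\<eta> \<in> {c<..<d}"
      then have e: "0 \<le> \<eta>" "t0 < \<eta>" using c c0 by auto
      have u: "0 < ub \<eta>" "0 < rhob \<eta>" using ub_pos rhob_pos e by auto
      have "ub \<eta> * (t0 - \<eta>) < 0" using u e by (simp add: mult_pos_neg)
      then have "0 < x - ub \<eta> * (t0 - \<eta>)" using x by linarith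
      then show "0 < ?h \<eta>" using u by simp
    qed
  qed (use c in auto)
  ultimately show ?thesis by simp
qed

lemma G0_dec:
  assumes c: "0 \<le> c" "c < d" "d \<le> t0"
  shows "Gint ub rhob d 0 t0 < Gint ub rhob c 0 t0"
proof -
  let ?h = "\<lambda>\<eta>. (0 - ub \<eta> * (t0 - \<eta>)) * rhob \<eta> * ub \<eta>"
  have "Gint ub rhob d 0 t0 - Gint ub rhob c 0 t0 = integral {c..d} ?h"
    unfolding Gint_def by (rule integral_split0[OF intG]) (use c in auto)
  moreover have "0 < integral {c..d} (\<lambda>\<eta>. - ?h \<eta>)"
  proof (rule integral_pos_open)
    show "(\<lambda>\<eta>. - ?h \<eta>) integrable_on {c..d}"
      by (rule integrable_neg, rule integrable_subinterval_real[OF intG[of 0 d]]) (use c in auto)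
  next
    show "\<And>\<eta>. \<eta> \<in> {c..d} \<Longrightarrow> 0 \<le> - ?h \<eta>"
    proof -
      fix \<eta> assume "\<eta> \<in> {c..d}"
      then have e: "0 \<le> \<eta>" "\<eta> \<le> t0" using c by auto
      have u: "0 < ub \<eta>" "0 < rhob \<eta>" using ub_pos rhob_pos e by auto
      have "0 \<le> ub \<eta> * (t0 - \<eta>)" using u e by simp
      then show "0 \<le> - ?h \<eta>" using u by simp
    qed
    show "\<And>\<eta>. \<eta> \<in> {c<..<d} \<Longrightarrow> 0 < - ?h \<eta>"
    proof -
      fix \<eta> assume "\<eta> \<in> {c<..<d}"
      then have e: "0 \<le> \<eta>" "\<eta> < t0" using c by auto
      have u: "0 < ub \<eta>" "0 < rhob \<eta>" using ub_pos rhob_pos e by auto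
      have "0 < ub \<eta> * (t0 - \<eta>)" using u e by simp
      then show "0 < - ?h \<eta>" using u by (simp add: mult_pos_pos)
    qed
  qed (use c in auto)
  ultimately show ?thesis by simp
qed

lemma isCont_Fx: "isCont (\<lambda>y. Fint u0 rho0 y x t0) z"
  unfolding Fint_eq by (intro continuous_intros isCont_FA isCont_FB)
lemma isCont_Gx: "isCont (\<lambda>y. Gint ub rhob y x t0) z"
  unfolding Gint_eq by (intro continuous_intros isCont_GA isCont_GB)

lemma Farg_ne: "Fargmin u0 rho0 x t0 \<noteq> {}"
  using argmin_exists[OF isCont_Fx, of "YF x" x] F_inc[of x] unfolding Fargmin_def YF_def by auto

lemma Farg_bd: "y \<in> Fargmin u0 rho0 x t0 \<Longrightarrow> 0 \<le> y \<and> y \<le> YF x"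
  using argmin_bound[of "YF x" "\<lambda>y. Fint u0 rho0 y x t0" y] F_inc[of x] unfolding Fargmin_def YF_def
  by auto

lemma Garg_ne: "0 \<le> x \<Longrightarrow> Gargmin ub rhob x t0 \<noteq> {}"
  using argmin_exists[OF isCont_Gx, of t0 x] G_inc[of x] t0_pos unfolding Gargmin_def by auto

lemma Garg_bd: "0 \<le> x \<Longrightarrow> \<tau> \<in> Gargmin ub rhob x t0 \<Longrightarrow> 0 \<le> \<tau> \<and> \<tau> \<le> t0"
  using argmin_bound[of t0 "\<lambda>y. Gint ub rhob y x t0" \<tau>] G_inc[of x] t0_pos unfolding Gargmin_def
  by auto

lemma Fmin_eq: "y \<in> Fargmin u0 rho0 x t0 \<Longrightarrow> Fmin u0 rho0 x t0 = Fint u0 rho0 y x t0"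
  unfolding Fmin_def by (rule cInf_eq_minimum) (auto simp: Fargmin_def)

lemma Gmin_eq: "\<tau> \<in> Gargmin ub rhob x t0 \<Longrightarrow> Gmin ub rhob x t0 = Gint ub rhob \<tau> x t0"
  unfolding Gmin_def by (rule cInf_eq_minimum) (auto simp: Gargmin_def)

abbreviation "MM x \<equiv> Mset AA BB x"

lemma M_pos:
  assumes x: "0 \<le> x" and m: "\<sigma> \<in> MM x" and s: "0 \<le> \<sigma>"
  shows "\<sigma> \<in> Fargmin u0 rho0 x t0" "Fmin u0 rho0 x t0 \<le> Gmin ub rhob x t0"
proof -
  have m': "\<forall>z. CC \<sigma> x \<le> CC z x" using m Mset_iff by blast
  show F: "\<sigma> \<in> Fargmin u0 rho0 x t0"
    unfolding Fargmin_def
  proof (intro CollectI conjI allI impI)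
    show "0 \<le> \<sigma>" using s .
    fix z :: real assume z: "0 \<le> z"
    show "Fint u0 rho0 \<sigma> x t0 \<le> Fint u0 rho0 z x t0"
      using m' CC_pos[OF s, of x] CC_pos[OF z, of x] by metis
  qed
  obtain \<tau> where t: "\<tau> \<in> Gargmin ub rhob x t0" using Garg_ne[OF x] by auto
  then have "0 \<le> \<tau>" unfolding Gargmin_def by simp
  then have "CC \<sigma> x \<le> Gint ub rhob \<tau> x t0" using m' CC_neg[of \<tau> x] by metis
  then show "Fmin u0 rho0 x t0 \<le> Gmin ub rhob x t0"
    using Fmin_eq[OF F] Gmin_eq[OF t] CC_pos[OF s] by simp
qed

lemma M_neg:
  assumes x: "0 \<le> x" and m: "\<sigma> \<in> MM x" and s: "\<sigma> \<le> 0"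
  shows "-\<sigma> \<in> Gargmin ub rhob x t0" "Gmin ub rhob x t0 \<le> Fmin u0 rho0 x t0"
proof -
  have m': "\<forall>z. CC \<sigma> x \<le> CC z x" using m Mset_iff by blast
  have e: "CC \<sigma> x = Gint ub rhob (-\<sigma>) x t0" using CC_neg[of "-\<sigma>" x] s by simp
  show G: "-\<sigma> \<in> Gargmin ub rhob x t0"
    unfolding Gargmin_def
  proof (intro CollectI conjI allI impI)
    show "0 \<le> -\<sigma>" using s by simp
    fix z :: real assume "0 \<le> z"
    then show "Gint ub rhob (-\<sigma>) x t0 \<le> Gint ub rhob z x t0"
      using m' e CC_neg[of z x] by metis
  qed
  obtain y where y: "y \<in> Fargmin u0 rho0 x t0" using Farg_ne by auto
  then have "0 \<le> y" unfolding Fargmin_def by simp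
  then have "CC \<sigma> x \<le> Fint u0 rho0 y x t0" using m' CC_pos[of y x] by metis
  then show "Gmin ub rhob x t0 \<le> Fmin u0 rho0 x t0"
    using Fmin_eq[OF y] Gmin_eq[OF G] e by simp
qed

lemma M_ne: "0 \<le> x \<Longrightarrow> MM x \<noteq> {}"
proof -
  assume x: "0 \<le> x"
  obtain y where y: "y \<in> Fargmin u0 rho0 x t0" using Farg_ne by auto
  obtain \<tau> where t: "\<tau> \<in> Gargmin ub rhob x t0" using Garg_ne[OF x] by auto
  have y0: "0 \<le> y" and yF: "\<forall>z\<ge>0. Fint u0 rho0 y x t0 \<le> Fint u0 rho0 z x t0"
    using y unfolding Fargmin_def by auto
  have t0': "0 \<le> \<tau>" and tG: "\<forall>z\<ge>0. Gint ub rhob \<tau> x t0 \<le> Gint ub rhob z x t0"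
    using t unfolding Gargmin_def by auto
  have all: "CC z x \<ge> min (Fint u0 rho0 y x t0) (Gint ub rhob \<tau> x t0)" for z
  proof (cases "0 \<le> z")
    case True then show ?thesis using yF CC_pos[OF True] by fastforce
  next
    case False
    then have "CC z x = Gint ub rhob (-z) x t0" using CC_neg[of "-z" x] by simp
    moreover have "Gint ub rhob \<tau> x t0 \<le> Gint ub rhob (-z) x t0" using tG False by simp
    ultimately show ?thesis by linarith
  qed
  show ?thesis
  proof (cases "Fint u0 rho0 y x t0 \<le> Gint ub rhob \<tau> x t0")
    case True
    have "y \<in> MM x" unfolding Mset_iff using all True CC_pos[OF y0] by (metis min.absorb1)
    then show ?thesis by blast
  next
    case False
    have "-\<tau> \<in> MM x" unfolding Mset_iff using all False CC_neg[OF t0'] by (metis min.absorb2 nle_le)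
    then show ?thesis by blast
  qed
qed

lemma H0: "\<sigma> \<in> MM 0 \<Longrightarrow> \<sigma> < 0 \<Longrightarrow> \<sigma> = -t0"
proof -
  assume m: "\<sigma> \<in> MM 0" and s: "\<sigma> < 0"
  have G: "-\<sigma> \<in> Gargmin ub rhob 0 t0" using M_neg(1)[OF _ m] s by simp
  then have le: "Gint ub rhob (-\<sigma>) 0 t0 \<le> Gint ub rhob t0 0 t0" unfolding Gargmin_def using t0_pos by simp
  show "\<sigma> = -t0"
  proof (rule ccontr)
    assume ne: "\<sigma> \<noteq> -t0"
    show False
    proof (cases "-\<sigma> < t0")
      case True
      then show False using G0_dec[of "-\<sigma>" t0] s le by simp
    next
      case False
      then have "t0 < -\<sigma>" using ne by auto
      then show False using G_inc[of 0 t0 "-\<sigma>"] le by simp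
    qed
  qed
qed

end

context setting begin

abbreviation "Tri x \<equiv> char_triangle u0 ub rho0 rhob x t0"

lemma Fbdd: "bdd_above (Fargmin u0 rho0 x t0)" "bdd_below (Fargmin u0 rho0 x t0)"
  using Farg_bd[of _ x] by (auto intro!: bdd_aboveI[of _ "YF x"] bdd_belowI[of _ 0])

lemma Gbdd: "0 \<le> x \<Longrightarrow> bdd_above (Gargmin ub rhob x t0)" "0 \<le> x \<Longrightarrow> bdd_below (Gargmin ub rhob x t0)"
  using Garg_bd[of x] by (auto intro!: bdd_aboveI[of _ t0] bdd_belowI[of _ 0])

lemma y_le: "y \<in> Fargmin u0 rho0 x t0 \<Longrightarrow> y_lo u0 rho0 x t0 \<le> y \<and> y \<le> y_hi u0 rho0 x t0"
  unfolding y_lo_def y_hi_def using cInf_lower[OF _ Fbdd(2)] cSup_upper[OF _ Fbdd(1)] by auto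

lemma ylo_nn: "0 \<le> y_lo u0 rho0 x t0"
  unfolding y_lo_def by (rule cInf_greatest[OF Farg_ne]) (use Farg_bd in auto)

lemma yhi_nn: "0 \<le> y_hi u0 rho0 x t0"
proof -
  obtain y where y: "y \<in> Fargmin u0 rho0 x t0" using Farg_ne by auto
  then show ?thesis using y_le[OF y] Farg_bd[OF y] by linarith
qed

lemma t_le: "0 \<le> x \<Longrightarrow> \<tau> \<in> Gargmin ub rhob x t0 \<Longrightarrow> tau_lo ub rhob x t0 \<le> \<tau> \<and> \<tau> \<le> tau_hi ub rhob x t0"
  unfolding tau_lo_def tau_hi_def using cInf_lower[OF _ Gbdd(2)] cSup_upper[OF _ Gbdd(1)] by auto

lemma tlo_nn: "0 \<le> x \<Longrightarrow> 0 \<le> tau_lo ub rhob x t0"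
  unfolding tau_lo_def by (rule cInf_greatest[OF Garg_ne]) (use Garg_bd in auto)

lemma thi_le: "0 \<le> x \<Longrightarrow> tau_hi ub rhob x t0 \<le> t0"
  unfolding tau_hi_def by (rule cSup_least[OF Garg_ne]) (use Garg_bd in auto)

lemma t_bounds: "0 \<le> x \<Longrightarrow> 0 \<le> tau_lo ub rhob x t0 \<and> tau_lo ub rhob x t0 \<le> t0 \<and> 0 \<le> tau_hi ub rhob x t0 \<and> tau_hi ub rhob x t0 \<le> t0"
proof -
  assume x: "0 \<le> x"
  obtain \<tau> where t: "\<tau> \<in> Gargmin ub rhob x t0" using Garg_ne[OF x] by auto
  show ?thesis using t_le[OF x t] tlo_nn[OF x] thi_le[OF x] Garg_bd[OF x t] by linarith
qed

lemma Tri_eq: "Tri x = (if 0 < x \<and> Fmin u0 rho0 x t0 < Gmin ub rhob x t0 then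
       convex hull {(x, t0), (y_lo u0 rho0 x t0, 0), (y_hi u0 rho0 x t0, 0)}
     else if Fmin u0 rho0 x t0 > Gmin ub rhob x t0 then
       convex hull {(x, t0), (0, tau_lo ub rhob x t0), (0, tau_hi ub rhob x t0)}
     else if Fmin u0 rho0 x t0 = Gmin ub rhob x t0 then
       convex hull {(x, t0), (y_hi u0 rho0 x t0, 0), (0, tau_hi ub rhob x t0), (0, 0)}
     else
       convex hull {(0, t0), (0, 0), (y_hi u0 rho0 0 t0, 0)})"
  by (simp add: char_triangle_def Let_def)

lemma V_in: "0 \<le> x \<Longrightarrow> (x, t0) \<in> Tri x"
  unfolding Tri_eq by (auto intro: hull_inc)

lemma fan_pos:
  assumes x: "0 \<le> x" and m1: "\<sigma>1 \<in> MM x" and m2: "\<sigma>2 \<in> MM x" and le: "\<sigma>1 \<le> \<sigma>" "\<sigma> \<le> \<sigma>2"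
    and s: "0 \<le> \<sigma>"
  shows "(\<sigma>, 0) \<in> Tri x"
proof -
  have s2: "0 \<le> \<sigma>2" using le s by simp
  have F2: "\<sigma>2 \<in> Fargmin u0 rho0 x t0" and FG: "Fmin u0 rho0 x t0 \<le> Gmin ub rhob x t0"
    using M_pos[OF x m2 s2] by auto
  have s2hi: "\<sigma> \<le> y_hi u0 rho0 x t0" using y_le[OF F2] le by simp
  show ?thesis
  proof (cases "Fmin u0 rho0 x t0 < Gmin ub rhob x t0")
    case lt: True
    have s1: "0 \<le> \<sigma>1"
    proof (rule ccontr)
      assume "\<not> 0 \<le> \<sigma>1"
      then show False using M_neg(2)[OF x m1] lt by simp
    qed
    have F1: "\<sigma>1 \<in> Fargmin u0 rho0 x t0" using M_pos(1)[OF x m1 s1] .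
    show ?thesis
    proof (cases "0 < x")
      case True
      have "(\<sigma>,0) \<in> convex hull {(x, t0), (y_lo u0 rho0 x t0, 0), (y_hi u0 rho0 x t0, 0)}"
        by (rule seg_x[where p="y_lo u0 rho0 x t0" and q="y_hi u0 rho0 x t0"])
           (use y_le[OF F1] y_le[OF F2] le in \<open>auto intro: hull_inc\<close>)
      then show ?thesis unfolding Tri_eq using True lt by simp
    next
      case False
      then have x0: "x = 0" using x by simp
      have "(\<sigma>,0) \<in> convex hull {(0, t0), (0, 0), (y_hi u0 rho0 0 t0, 0)}"
        by (rule seg_x[where p=0 and q="y_hi u0 rho0 0 t0"]) (use s s2hi x0 in \<open>auto intro: hull_inc\<close>)
      then show ?thesis unfolding Tri_eq using x0 lt by simp
    qed
  next
    case False
    then have eq: "Fmin u0 rho0 x t0 = Gmin ub rhob x t0" using FG by simp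
    have "(\<sigma>,0) \<in> convex hull {(x, t0), (y_hi u0 rho0 x t0, 0), (0, tau_hi ub rhob x t0), (0, 0)}"
      by (rule seg_x[where p=0 and q="y_hi u0 rho0 x t0"]) (use s s2hi in \<open>auto intro: hull_inc\<close>)
    then show ?thesis unfolding Tri_eq using eq by simp
  qed
qed

lemma fan_neg:
  assumes x: "0 \<le> x" and m1: "\<sigma>1 \<in> MM x" and m2: "\<sigma>2 \<in> MM x" and le: "\<sigma>1 \<le> \<sigma>" "\<sigma> \<le> \<sigma>2"
    and s: "\<sigma> < 0"
  shows "(0, -\<sigma>) \<in> Tri x"
proof -
  have s1: "\<sigma>1 \<le> 0" using le s by simp
  have G1: "-\<sigma>1 \<in> Gargmin ub rhob x t0" and GF: "Gmin ub rhob x t0 \<le> Fmin u0 rho0 x t0"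
    using M_neg[OF x m1 s1] by auto
  have s1hi: "-\<sigma> \<le> tau_hi ub rhob x t0" using t_le[OF x G1] le by simp
  show ?thesis
  proof (cases "Gmin ub rhob x t0 < Fmin u0 rho0 x t0")
    case lt: True
    have s2: "\<sigma>2 < 0"
    proof (rule ccontr)
      assume "\<not> \<sigma>2 < 0"
      then show False using M_pos(2)[OF x m2] lt by simp
    qed
    have G2: "-\<sigma>2 \<in> Gargmin ub rhob x t0" using M_neg(1)[OF x m2] s2 by simp
    have "(0,-\<sigma>) \<in> convex hull {(x, t0), (0, tau_lo ub rhob x t0), (0, tau_hi ub rhob x t0)}"
      by (rule seg_y[where p="tau_lo ub rhob x t0" and q="tau_hi ub rhob x t0"])
         (use t_le[OF x G1] t_le[OF x G2] le in \<open>auto intro: hull_inc\<close>)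
    then show ?thesis unfolding Tri_eq using lt by auto
  next
    case False
    then have eq: "Fmin u0 rho0 x t0 = Gmin ub rhob x t0" using GF by simp
    have "(0,-\<sigma>) \<in> convex hull {(x, t0), (y_hi u0 rho0 x t0, 0), (0, tau_hi ub rhob x t0), (0, 0)}"
      by (rule seg_y[where p=0 and q="tau_hi ub rhob x t0"]) (use s s1hi in \<open>auto intro: hull_inc\<close>)
    then show ?thesis unfolding Tri_eq using eq by simp
  qed
qed

lemma Tri_sub: "0 \<le> x \<Longrightarrow> Tri x \<subseteq> {(x, t). 0 \<le> x \<and> 0 \<le> t \<and> t \<le> t0}"
proof -
  assume x: "0 \<le> x"
  have cv0: "convex ({0::real..} \<times> {0..t0})" by (intro convex_Times convex_real_interval)
  have yb: "0 \<le> y_lo u0 rho0 x t0" "0 \<le> y_hi u0 rho0 x t0" "0 \<le> y_hi u0 rho0 0 t0"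
    using ylo_nn yhi_nn by auto
  have tb: "0 \<le> tau_lo ub rhob x t0 \<and> tau_lo ub rhob x t0 \<le> t0 \<and> 0 \<le> tau_hi ub rhob x t0 \<and> tau_hi ub rhob x t0 \<le> t0"
    using t_bounds[OF x] .
  let ?S = "{0::real..} \<times> {0..t0}"
  have sub: "convex hull P \<subseteq> ?S" if "P \<subseteq> ?S" for P
    by (rule hull_minimal[where S=convex, OF that cv0])
  have h1: "convex hull {(x, t0), (y_lo u0 rho0 x t0, 0), (y_hi u0 rho0 x t0, 0)} \<subseteq> ?S"
    by (rule sub) (use x yb t0_pos in simp)
  have h2: "convex hull {(x, t0), (0, tau_lo ub rhob x t0), (0, tau_hi ub rhob x t0)} \<subseteq> ?S"
    by (rule sub) (use x tb t0_pos in simp)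
  have h3: "convex hull {(x, t0), (y_hi u0 rho0 x t0, 0), (0, tau_hi ub rhob x t0), (0, 0)} \<subseteq> ?S"
    by (rule sub) (use x yb tb t0_pos in simp)
  have h4: "convex hull {(0, t0), (0, 0), (y_hi u0 rho0 0 t0, 0)} \<subseteq> ?S"
    by (rule sub) (use x yb t0_pos in simp)
  have "Tri x \<subseteq> ?S"
    unfolding Tri_eq using h1 h2 h3 h4 by (simp split: if_split)
  then show ?thesis by auto
qed

lemma cover:
  assumes a: "0 \<le> a" and s: "0 \<le> s" "s \<le> t0"
  shows "\<exists>x\<ge>0. (a, s) \<in> Tri x"
proof (cases "s = t0")
  case True then show ?thesis using V_in[of a] a by auto
next
  case False
  then have st: "s < t0" using s by simp
  have "(\<exists>\<sigma>\<in>MM 0. 0 \<le> \<sigma> \<and> Dfun t0 a s 0 \<sigma> \<le> 0) \<or>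
         (\<exists>x\<ge>0. \<exists>\<sigma>1\<in>MM x. \<exists>\<sigma>2\<in>MM x. \<exists>\<sigma>. \<sigma>1 \<le> \<sigma> \<and> \<sigma> \<le> \<sigma>2 \<and> -s \<le> \<sigma> \<and> Dfun t0 a s x \<sigma> = 0)"
    by (rule cover_abstract[OF isCont_AA isCont_BB BB_strict M_ne H0 t0_pos s(1) st a])
  then show ?thesis
  proof
    assume "\<exists>\<sigma>\<in>MM 0. 0 \<le> \<sigma> \<and> Dfun t0 a s 0 \<sigma> \<le> 0"
    then obtain \<sigma> where m: "\<sigma> \<in> MM 0" and sg: "0 \<le> \<sigma>" and D: "Dfun t0 a s 0 \<sigma> \<le> 0" by blast
    have FG: "Fmin u0 rho0 0 t0 \<le> Gmin ub rhob 0 t0" using M_pos(2)[OF _ m sg] by simp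
    have O: "(0,0) \<in> Tri 0"
      unfolding Tri_eq using FG by (auto intro: hull_inc)
    have Q: "(\<sigma>,0) \<in> Tri 0" by (rule fan_pos[OF _ m m]) (use sg in auto)
    have "(a,s) \<in> Tri 0"
      by (rule point_in0[OF _ V_in[of 0, simplified] O Q s(1) st a D sg])
         (simp add: char_triangle_def Let_def)
    then show ?thesis by blast
  next
    assume "\<exists>x\<ge>0. \<exists>\<sigma>1\<in>MM x. \<exists>\<sigma>2\<in>MM x. \<exists>\<sigma>. \<sigma>1 \<le> \<sigma> \<and> \<sigma> \<le> \<sigma>2 \<and> -s \<le> \<sigma> \<and> Dfun t0 a s x \<sigma> = 0"
    then obtain x \<sigma>1 \<sigma>2 \<sigma> where x: "0 \<le> x" and m1: "\<sigma>1 \<in> MM x" and m2: "\<sigma>2 \<in> MM x"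
      and le: "\<sigma>1 \<le> \<sigma>" "\<sigma> \<le> \<sigma>2" and ss: "-s \<le> \<sigma>" and D: "Dfun t0 a s x \<sigma> = 0" by blast
    have "(a,s) \<in> Tri x"
    proof (rule point_in[OF _ V_in[OF x] s(1) st ss D])
      show "convex (Tri x)" by (simp add: char_triangle_def Let_def)
      show "0 \<le> \<sigma> \<Longrightarrow> (\<sigma>, 0) \<in> Tri x" using fan_pos[OF x m1 m2 le] by simp
      show "\<sigma> < 0 \<Longrightarrow> (0, -\<sigma>) \<in> Tri x" using fan_neg[OF x m1 m2 le] by simp
    qed
    then show ?thesis using x by blast
  qed
qed

end


theorem lemma2p13:
  fixes u0 ub rho0 rhob :: "real \<Rightarrow> real" and t0 :: real
  assumes u0_meas: "set_borel_measurable borel {0..} u0"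
      and u0_bdd: "\<exists>M. \<forall>x\<ge>0. \<bar>u0 x\<bar> \<le> M"
      and ub_meas: "set_borel_measurable borel {0..} ub"
      and ub_bdd: "\<exists>M. \<forall>x\<ge>0. \<bar>ub x\<bar> \<le> M"
      and ub_pos: "\<forall>x\<ge>0. ub x > 0"
      and rho0_meas: "set_borel_measurable borel {0..} rho0"
      and rho0_pos: "\<forall>x\<ge>0. rho0 x > 0"
      and rho0_locbdd: "\<forall>b\<ge>0. \<exists>M. \<forall>x\<in>{0..b}. \<bar>rho0 x\<bar> \<le> M"
      and rhob_meas: "set_borel_measurable borel {0..} rhob"
      and rhob_pos: "\<forall>x\<ge>0. rhob x > 0"
      and rhob_locbdd: "\<forall>b\<ge>0. \<exists>M. \<forall>x\<in>{0..b}. \<bar>rhob x\<bar> \<le> M"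
      and t0_pos: "t0 > 0"
  shows "(\<Union>x\<in>{0..}. char_triangle u0 ub rho0 rhob x t0) = {(x, t). 0 \<le> x \<and> 0 \<le> t \<and> t \<le> t0}"
proof -
  interpret S: setting u0 ub rho0 rhob t0
    unfolding setting_def using assms by blast
  show ?thesis
  proof (rule subset_antisym)
    show "(\<Union>x\<in>{0..}. char_triangle u0 ub rho0 rhob x t0) \<subseteq> {(x, t). 0 \<le> x \<and> 0 \<le> t \<and> t \<le> t0}"
      using S.Tri_sub by auto
  next
    show "{(x, t). 0 \<le> x \<and> 0 \<le> t \<and> t \<le> t0} \<subseteq> (\<Union>x\<in>{0..}. char_triangle u0 ub rho0 rhob x t0)"
    proof
      fix p :: "real \<times> real" assume "p \<in> {(x, t). 0 \<le> x \<and> 0 \<le> t \<and> t \<le> t0}"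
      then obtain a s :: real where p: "p = (a, s)" and a: "0 \<le> a" and s: "0 \<le> s" "s \<le> t0" by auto
      obtain x where "0 \<le> x" "(a, s) \<in> char_triangle u0 ub rho0 rhob x t0"
        using S.cover[OF a s] by blast
      then show "p \<in> (\<Union>x\<in>{0..}. char_triangle u0 ub rho0 rhob x t0)" using p by auto
    qed
  qed
qed

end
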